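(* Let $m$ be a positive integer and suppose that complex numbers $c_0,c_1,\dots,c_{2m+1}$ satisfy, identically as meromorphic functions of $s\in\mathbb{C}$, $$c_{2m+1}\zeta(-2m-1,s+2m+1)+\cdots+c_1\zeta(-1,s+1)+c_0\,\zeta(0,s)/2\equiv0.$$ Then $c_0+c_1+c_2+\cdots+c_{2m+1}=0$.
   Context: For an integer $c\ge 0$, $\zeta(-c,s+c)$ denotes the Euler–Zagier double zeta function $\zeta(s_1,s_2)=\sum_{1\le n_1<n_2} n_1^{-s_1}n_2^{-s_2}$ evaluated at $(s_1,s_2)=(-c,s+c)$; i.e. it is the meromorphic continuation to all $s\in\mathbb{C}$ of the series $\sum_{m,n\ge1} m^{c}(m+n)^{-s-c}$, which converges absolutely for $\Re(s)>2$. *)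

theory Defs
  imports "HOL-Complex_Analysis.Complex_Analysis"
begin

text \<open>The series defining the Euler--Zagier double zeta value zeta(-c, s+c):
  sum over m, n >= 1 of m^c (m+n)^(-s-c); absolutely convergent for Re s > 2.\<close>
definition dzeta_series :: "nat \<Rightarrow> complex \<Rightarrow> complex" where
  "dzeta_series c s =
     (\<Sum>\<^sub>\<infinity>(m, n) \<in> {1..} \<times> {1..}.
        of_nat m ^ c * of_nat (m + n) powr (- (s + of_nat c)))"

end

theory Submission
  imports Defs "HOL-Real_Asymp.Real_Asymp"
begin

definition PS :: "nat \<Rightarrow> nat \<Rightarrow> real" where "PS j N = (\<Sum>i<N. real i ^ j)"

lemma PS_rec: "real N ^ Suc k = (\<Sum>j\<le>k. real (Suc k choose j) * PS j N)"
proof -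
  have "real N ^ Suc k = (\<Sum>i<N. real (Suc i) ^ Suc k - real i ^ Suc k)"
    by (subst sum_lessThan_telescope) simp
  also have "\<dots> = (\<Sum>i<N. \<Sum>j\<le>k. real (Suc k choose j) * real i ^ j)"
  proof (rule sum.cong[OF refl])
    fix i
    have "real (Suc i) ^ Suc k = (\<Sum>j\<le>Suc k. real (Suc k choose j) * real i ^ j)"
      using binomial_ring[of "real i" 1 "Suc k"] by (simp add: add.commute)
    also have "\<dots> = (\<Sum>j\<le>k. real (Suc k choose j) * real i ^ j) + real i ^ Suc k"
      by (subst sum.atMost_Suc) simp
    finally show "real (Suc i) ^ Suc k - real i ^ Suc k = (\<Sum>j\<le>k. real (Suc k choose j) * real i ^ j)"
      by simp
  qed
  also have "\<dots> = (\<Sum>j\<le>k. real (Suc k choose j) * PS j N)"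
    by (subst sum.swap) (simp add: PS_def sum_distrib_left)
  finally show ?thesis .
qed

lemma PS_nonneg: "0 \<le> PS j N"
  unfolding PS_def by (intro sum_nonneg) auto

lemma PS_le: "PS j N \<le> real N ^ Suc j"
proof -
  have "PS j N \<le> (\<Sum>i<N. real N ^ j)"
    unfolding PS_def by (intro sum_mono power_mono) auto
  also have "\<dots> = real N ^ Suc j" by simp
  finally show ?thesis .
qed

lemma PS_small:
  assumes "Suc j < k"
  shows "(\<lambda>N. PS j N / real N ^ k) \<longlonglongrightarrow> 0"
proof (rule tendsto_sandwich[of "\<lambda>_. 0" _ _ "\<lambda>N. 1 / real N"])
  show "\<forall>\<^sub>F N in sequentially. 0 \<le> PS j N / real N ^ k"
    by (intro always_eventually allI divide_nonneg_nonneg PS_nonneg) auto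
  show "\<forall>\<^sub>F N in sequentially. PS j N / real N ^ k \<le> 1 / real N"
  proof (rule eventually_sequentiallyI[of 1])
    fix N :: nat assume N: "1 \<le> N"
    have "PS j N / real N ^ k \<le> real N ^ Suc j / real N ^ k"
      using PS_le N by (intro divide_right_mono) auto
    also have "real N ^ Suc j / real N ^ k = 1 / real N ^ (k - Suc j)"
    proof -
      have "k = Suc j + (k - Suc j)" using assms by simp
      then have "real N ^ k = real N ^ Suc j * real N ^ (k - Suc j)" by (metis power_add)
      then show ?thesis using N by simp
    qed
    also have "\<dots> \<le> 1 / real N"
      using N assms by (intro divide_left_mono) (auto intro!: power_increasing[of 1 _ "real N", simplified])
    finally show "PS j N / real N ^ k \<le> 1 / real N" .
  qed
  show "(\<lambda>_. 0::real) \<longlonglongrightarrow> 0" by simp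
  show "(\<lambda>N. 1 / real N) \<longlonglongrightarrow> 0" by (rule lim_const_over_n)
qed

lemma PS_split:
  "real N ^ Suc k = (\<Sum>j<k. real (Suc k choose j) * PS j N) + real (Suc k) * PS k N"
  using PS_rec[of N k] by (simp add: lessThan_Suc_atMost[symmetric])

lemma PS_lim1: "(\<lambda>N. PS k N / real N ^ Suc k) \<longlonglongrightarrow> 1 / real (Suc k)"
proof -
  have lim: "(\<lambda>N. (1 - (\<Sum>j<k. real (Suc k choose j) * (PS j N / real N ^ Suc k))) / real (Suc k))
      \<longlonglongrightarrow> (1 - (\<Sum>j<k. real (Suc k choose j) * 0)) / real (Suc k)"
    by (intro tendsto_intros PS_small) auto
  have ev: "\<forall>\<^sub>F N in sequentially. (1 - (\<Sum>j<k. real (Suc k choose j) * (PS j N / real N ^ Suc k))) / real (Suc k)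
      = PS k N / real N ^ Suc k"
  proof (rule eventually_sequentiallyI[of 1])
    fix N :: nat assume N: "1 \<le> N"
    have "1 - (\<Sum>j<k. real (Suc k choose j) * (PS j N / real N ^ Suc k))
        = (real N ^ Suc k - (\<Sum>j<k. real (Suc k choose j) * PS j N)) / real N ^ Suc k"
      using N by (simp add: times_divide_eq_right sum_divide_distrib[symmetric] diff_divide_distrib del: of_nat_Suc)
    also have "\<dots> = real (Suc k) * PS k N / real N ^ Suc k"
      by (subst (1) PS_split) simp
    finally show "(1 - (\<Sum>j<k. real (Suc k choose j) * (PS j N / real N ^ Suc k))) / real (Suc k)
      = PS k N / real N ^ Suc k" by (simp del: of_nat_Suc)
  qed
  show ?thesis using Lim_transform_eventually[OF lim ev] by simp
qed

lemma PS_lim2: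
  assumes "k \<ge> 1"
  shows "(\<lambda>N. PS k N / real N ^ k - real N / real (Suc k)) \<longlonglongrightarrow> - 1 / 2"
proof -
  obtain p where k: "k = Suc p" using assms by (cases k) auto
  define L where "L j = (if j = p then 1 / real k else 0)" for j
  have lj: "(\<lambda>N. PS j N / real N ^ k) \<longlonglongrightarrow> L j" if "j < k" for j
  proof (cases "j = p")
    case True thus ?thesis using PS_lim1[of p] k by (simp add: L_def)
  next
    case False
    have "Suc j < k" using that k False by auto
    from PS_small[OF this] show ?thesis by (simp add: L_def False)
  qed
  have lim: "(\<lambda>N. - (\<Sum>j<k. real (Suc k choose j) * (PS j N / real N ^ k)) / real (Suc k))
      \<longlonglongrightarrow> - (\<Sum>j<k. real (Suc k choose j) * L j) / real (Suc k)"
    by (intro tendsto_intros lj) auto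
  have "(\<Sum>j<k. real (Suc k choose j) * L j) = real (Suc k choose p) / real k"
    using k by (simp add: L_def if_distrib sum.If_cases)
  also have "Suc k choose p = Suc k choose 2"
    using k binomial_symmetric[of p "Suc k"] by simp
  also have "real (Suc k choose 2) = real (Suc k) * real k / 2"
  proof -
    have ev: "2 dvd (Suc k * k)" by auto
    have "real (Suc k choose 2) = real (Suc k * k div 2)" by (simp add: choose_two)
    also have "\<dots> = real (Suc k * k) / 2" using real_of_nat_div[OF ev] by simp
    finally show ?thesis by (simp add: algebra_simps)
  qed
  finally have val: "- (\<Sum>j<k. real (Suc k choose j) * L j) / real (Suc k) = - 1 / 2"
    using k by (simp add: field_simps del: of_nat_Suc)
  have ev: "\<forall>\<^sub>F N in sequentially. - (\<Sum>j<k. real (Suc k choose j) * (PS j N / real N ^ k)) / real (Suc k)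
      = PS k N / real N ^ k - real N / real (Suc k)"
  proof (rule eventually_sequentiallyI[of 1])
    fix N :: nat assume N: "1 \<le> N"
    have e: "real N ^ Suc k = (\<Sum>j<k. real (Suc k choose j) * PS j N) + real (Suc k) * PS k N"
      by (rule PS_split)
    have "PS k N / real N ^ k - real N / real (Suc k)
       = (real (Suc k) * PS k N - real N ^ Suc k) / (real (Suc k) * real N ^ k)"
      using N by (simp add: field_simps del: of_nat_Suc)
    also have "\<dots> = - (\<Sum>j<k. real (Suc k choose j) * PS j N) / (real (Suc k) * real N ^ k)"
      by (subst e) simp
    also have "\<dots> = - (\<Sum>j<k. real (Suc k choose j) * (PS j N / real N ^ k)) / real (Suc k)"
      using N by (simp add: field_simps sum_divide_distrib del: of_nat_Suc)
    finally show "- (\<Sum>j<k. real (Suc k choose j) * (PS j N / real N ^ k)) / real (Suc k)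
      = PS k N / real N ^ k - real N / real (Suc k)" by simp
  qed
  show ?thesis using Lim_transform_eventually[OF lim ev] val by simp
qed

definition F :: "nat \<Rightarrow> nat \<Rightarrow> real" where "F k N = (\<Sum>i\<in>{1..<N}. real i ^ k)"

lemma F_nonneg: "0 \<le> F k N" unfolding F_def by (intro sum_nonneg) auto

lemma F_le: "F k N \<le> real N ^ Suc k"
proof -
  have "F k N \<le> (\<Sum>i\<in>{1..<N}. real N ^ k)"
    unfolding F_def by (intro sum_mono power_mono) auto
  also have "\<dots> \<le> real N * real N ^ k" by (cases N) (auto intro!: mult_right_mono)
  finally show ?thesis by simp
qed

lemma has_sum_sum_finite:
  fixes f :: "'i \<Rightarrow> 'a \<Rightarrow> 'b::topological_comm_monoid_add"
  assumes "finite I" "\<And>i. i \<in> I \<Longrightarrow> (f i has_sum s i) A"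
  shows "((\<lambda>x. \<Sum>i\<in>I. f i x) has_sum (\<Sum>i\<in>I. s i)) A"
  using assms by (induction I rule: finite_induct) (auto intro!: has_sum_add)

lemma dz_summable:
  assumes x: "x > 2"
  shows "(\<lambda>N. F k N * real N powr (-(x + real k))) summable_on UNIV"
proof (rule summable_on_comparison_test)
  show "(\<lambda>N. real N powr (1 - x)) summable_on UNIV"
    using x by (subst summable_on_UNIV_nonneg_real_iff) (auto simp: summable_real_powr_iff)
  fix N :: nat
  show "0 \<le> F k N * real N powr (-(x + real k))" using F_nonneg by simp
  show "F k N * real N powr (-(x + real k)) \<le> real N powr (1 - x)"
  proof (cases "N = 0")
    case True thus ?thesis by simp
  next
    case False
    have "F k N * real N powr (-(x + real k)) \<le> real N ^ Suc k * real N powr (-(x + real k))"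
      using F_le by (intro mult_right_mono) auto
    also have "real N ^ Suc k = real N powr real (Suc k)"
      using False by (subst powr_realpow) auto
    also have "real N powr real (Suc k) * real N powr (-(x + real k)) = real N powr (1 - x)"
      by (simp flip: powr_add)
    finally show ?thesis .
  qed
qed

lemma dz_has_sum:
  assumes x: "x > 2"
  shows "dzeta_series k (of_real x) = of_real (\<Sum>\<^sub>\<infinity>N. F k N * real N powr (-(x + real k)))"
proof -
  define a where "a N = F k N * real N powr (-(x + real k))" for N
  define f where "f = (\<lambda>(N, i). real i ^ k * real N powr (-(x + real k)))"
  have fa: "((\<lambda>i. f (N, i)) has_sum a N) {1..<N}" for N
    by (rule has_sum_finiteI) (auto simp: f_def a_def F_def sum_distrib_right)
  have as: "a summable_on UNIV" unfolding a_def by (rule dz_summable[OF x])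
  have fs: "f summable_on Sigma UNIV (\<lambda>N. {1..<N})"
    by (rule summable_on_SigmaI[OF fa as]) (auto simp: f_def)
  have fh: "(f has_sum (\<Sum>\<^sub>\<infinity>N. a N)) (Sigma UNIV (\<lambda>N. {1..<N}))"
    by (rule has_sum_SigmaI[OF fa _ fs]) (use as in auto)
  define h where "h = (\<lambda>(m::nat, n::nat). real m ^ k * real (m + n) powr (-(x + real k)))"
  have "(f has_sum (\<Sum>\<^sub>\<infinity>N. a N)) (Sigma UNIV (\<lambda>N. {1..<N})) = (h has_sum (\<Sum>\<^sub>\<infinity>N. a N)) ({1..} \<times> {1..})"
    by (rule has_sum_reindex_bij_witness[where i = "\<lambda>(m, n). (m + n, m)" and j = "\<lambda>(N, i). (i, N - i)"])
       (auto simp: f_def h_def)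
  with fh have hh: "(h has_sum (\<Sum>\<^sub>\<infinity>N. a N)) ({1..} \<times> {1..})" by simp
  have hc: "((\<lambda>p. complex_of_real (h p)) has_sum of_real (\<Sum>\<^sub>\<infinity>N. a N)) ({1..} \<times> {1..})"
    by (rule has_sum_of_real[OF hh])
  have eq: "(\<lambda>(m, n). of_nat m ^ k * of_nat (m + n) powr (- (complex_of_real x + of_nat k)))
      = (\<lambda>p. complex_of_real (h p))"
  proof (intro ext, clarify)
    fix m n :: nat
    have "(of_nat (m + n) :: complex) powr (- (complex_of_real x + of_nat k))
        = of_real (real (m + n)) powr of_real (-(x + real k))" by simp
    also have "\<dots> = of_real (real (m + n) powr (-(x + real k)))"
      by (rule powr_of_real) simp
    finally show "of_nat m ^ k * of_nat (m + n) powr (- (complex_of_real x + of_nat k))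
        = complex_of_real (h (m, n))" by (simp add: h_def)
  qed
  show ?thesis
    unfolding dzeta_series_def eq using hc by (simp add: infsumI a_def)
qed

lemma a_eq: "F k N * real N powr (-(x + real k)) = F k N / real N ^ k * real N powr (-x)"
proof (cases "N = 0")
  case True thus ?thesis by (simp add: F_def)
next
  case False
  have "real N powr (-(x + real k)) = real N powr (-x) * real N powr (- real k)"
    by (simp flip: powr_add)
  also have "real N powr (- real k) = inverse (real N ^ k)"
    using False by (simp add: powr_minus powr_realpow)
  finally show ?thesis by (simp add: field_simps)
qed

lemma G_has_sum:
  fixes cc :: "nat \<Rightarrow> complex"
  assumes x: "x > 2"
  shows "((\<lambda>N. (\<Sum>k=0..K. cc k * of_real (F k N / real N ^ k)) * of_real (real N powr -x))
           has_sum (\<Sum>k=0..K. cc k * dzeta_series k (of_real x))) UNIV"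
proof -
  have each: "((\<lambda>N. cc k * of_real (F k N * real N powr (-(x + real k)))) has_sum
      cc k * dzeta_series k (of_real x)) UNIV" for k
    unfolding dz_has_sum[OF x]
    by (intro has_sum_cmult_right has_sum_of_real has_sum_infsum dz_summable x)
  have "((\<lambda>N. \<Sum>k=0..K. cc k * of_real (F k N * real N powr (-(x + real k)))) has_sum
      (\<Sum>k=0..K. cc k * dzeta_series k (of_real x))) UNIV"
    by (rule has_sum_sum_finite) (simp, rule each)
  moreover have "(\<lambda>N. \<Sum>k=0..K. cc k * of_real (F k N * real N powr (-(x + real k))))
     = (\<lambda>N. (\<Sum>k=0..K. cc k * of_real (F k N / real N ^ k)) * of_real (real N powr -x))"
    by (intro ext) (simp only: a_eq of_real_mult sum_distrib_right mult.assoc)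
  ultimately show ?thesis by simp
qed

lemma powr_base_lim:
  assumes "0 < b" "b < (1::real)"
  shows "((\<lambda>x. b powr (x - 4)) \<longlongrightarrow> 0) at_top"
proof -
  have l: "ln b < 0" using assms by simp
  have "filterlim (\<lambda>x. ln b * (x - 4)) at_bot at_top"
    by (rule filterlim_tendsto_neg_mult_at_bot[OF tendsto_const l]) real_asymp
  hence "((\<lambda>x. exp (ln b * (x - 4))) \<longlongrightarrow> 0) at_top"
    by (rule filterlim_compose[OF exp_at_bot])
  thus ?thesis using assms by (simp add: powr_def mult.commute)
qed

lemma dirichlet_unique:
  fixes Q :: "nat \<Rightarrow> complex" and G :: "real \<Rightarrow> complex"
  assumes hs: "\<And>x. x > 2 \<Longrightarrow> ((\<lambda>N. Q N * of_real (real N powr -x)) has_sum G x) UNIV"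
    and bd: "\<And>N. norm (Q N) \<le> C * real N" and C: "C \<ge> 0"
    and fr: "\<And>X. \<exists>y\<ge>X. G y = 0"
    and Q0: "Q 0 = 0"
  shows "Q N = 0"
proof (induction N rule: less_induct)
  case (less N)
  show ?case
  proof (cases "N = 0")
    case True thus ?thesis using Q0 by simp
  next
    case False
    hence Npos: "real N > 0" by simp
    define b where "b = real N / real (Suc N)"
    have b: "0 < b" "b < 1" using Npos by (auto simp: b_def)
    define E where "E n = C * real N ^ 4 * real n powr (-3)" for n
    have p3: "(\<lambda>n. real n powr (-3)) summable_on UNIV"
      by (subst summable_on_UNIV_nonneg_real_iff) (auto simp: summable_real_powr_iff)
    have Es: "E summable_on UNIV"
      unfolding E_def by (rule summable_on_cmult_right[OF p3])
    define T where "T = (\<Sum>\<^sub>\<infinity>n. E n)"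
    define f where "f x = G x * of_real (real N powr x)" for x
    have bound: "norm (f x - Q N) \<le> b powr (x - 4) * T" if x: "x \<ge> 4" for x
    proof -
      define D where "D n = Q n * of_real (real n powr -x) * of_real (real N powr x)
          - (if n = N then Q N else 0)" for n
      have h1: "((\<lambda>n. Q n * of_real (real n powr -x) * of_real (real N powr x)) has_sum f x) UNIV"
        unfolding f_def using hs[of x] x by (intro has_sum_cmult_left) auto
      have h2: "((\<lambda>n. - (if n = N then Q N else 0)) has_sum - Q N) UNIV"
        by (rule has_sum_finite_neutralI[of "{N}"]) auto
      have hD: "(D has_sum (f x - Q N)) UNIV"
        unfolding D_def using has_sum_add[OF h1 h2]
        by (simp only: diff_conv_add_uminus)
      have hB: "((\<lambda>n. b powr (x - 4) * E n) has_sum (b powr (x - 4) * T)) UNIV"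
        unfolding T_def by (intro has_sum_cmult_right has_sum_infsum Es)
      have pt: "norm (D n) \<le> b powr (x - 4) * E n" for n
      proof -
        have B0: "0 \<le> b powr (x - 4) * E n" using C by (simp add: E_def)
        consider "n < N" | "n = N" | "n > N" by linarith
        thus ?thesis
        proof cases
          case 1 thus ?thesis using less.IH[OF 1] B0 by (simp add: D_def)
        next
          case 2
          have "real N powr -x * real N powr x = 1" using Npos by (simp flip: powr_add)
          hence "D n = 0" using 2 by (simp add: D_def mult.assoc flip: of_real_mult)
          thus ?thesis using B0 by simp
        next
          case 3
          hence npos: "real n > 0" using Npos by simp
          define q where "q = real N / real n"
          have q0: "0 < q" using npos Npos by (simp add: q_def)
          have qb: "q \<le> b" unfolding q_def b_def by (rule divide_left_mono) (use 3 npos Npos in auto)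
          have e1: "real n powr -x * real N powr x = q powr x"
            unfolding q_def using npos Npos by (subst powr_divide) (auto simp: powr_minus divide_inverse mult.commute)
          have e2: "q powr x = q ^ 4 * q powr (x - 4)"
          proof -
            have "q powr x = q powr 4 * q powr (x - 4)" by (simp flip: powr_add)
            also have "q powr 4 = q ^ 4" using q0 powr_realpow[of q 4] by simp
            finally show ?thesis .
          qed
          have e3: "q powr (x - 4) \<le> b powr (x - 4)"
            using q0 qb x by (intro powr_mono2) auto
          have e4: "real n * q ^ 4 = real N ^ 4 * real n powr (-3)"
          proof -
            have "real n powr (-3) = inverse (real n ^ 3)"
              using npos powr_realpow[of "real n" 3] by (simp add: powr_minus)
            moreover have "real n * q ^ 4 = real N ^ 4 / real n ^ 3"
              unfolding q_def using npos by (simp add: power_divide power_numeral_reduce)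
            ultimately show ?thesis by (simp add: divide_inverse)
          qed
          have "norm (D n) = norm (Q n) * (real n powr -x * real N powr x)"
            using 3 by (simp add: D_def norm_mult)
          also have "\<dots> = norm (Q n) * (q ^ 4 * q powr (x - 4))" by (simp only: e1 e2)
          also have "\<dots> \<le> C * real n * (q ^ 4 * q powr (x - 4))"
            by (intro mult_right_mono bd) (use q0 in auto)
          also have "\<dots> \<le> C * real n * (q ^ 4 * b powr (x - 4))"
            using C npos q0 e3 by (intro mult_left_mono) auto
          also have "\<dots> = b powr (x - 4) * (C * (real n * q ^ 4))" by (simp only: ac_simps)
          also have "\<dots> = b powr (x - 4) * E n" by (simp only: e4 E_def ac_simps)
          finally show ?thesis .
        qed
      qed
      show ?thesis by (rule norm_infsum_le[OF hD hB]) (use pt in auto)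
    qed
    have l0: "((\<lambda>x. b powr (x - 4) * T) \<longlongrightarrow> 0) at_top"
      using tendsto_mult_right[OF powr_base_lim[OF b], of T] by simp
    have ev: "eventually (\<lambda>x. norm (f x - Q N) \<le> b powr (x - 4) * T) at_top"
      using eventually_ge_at_top[of "4::real"] by eventually_elim (rule bound)
    have "((\<lambda>x. f x - Q N) \<longlongrightarrow> 0) at_top"
      by (rule Lim_null_comparison[OF ev l0])
    hence lim: "(f \<longlongrightarrow> Q N) at_top" by (simp add: LIM_zero_iff)
    show ?thesis
    proof (rule ccontr)
      assume "Q N \<noteq> 0"
      from tendsto_imp_eventually_ne[OF lim this]
      obtain X where X: "\<And>x. x \<ge> X \<Longrightarrow> f x \<noteq> 0"
        by (auto simp: eventually_at_top_linorder)
      obtain y where "y \<ge> X" "G y = 0" using fr by blast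
      thus False using X[of y] by (simp add: f_def)
    qed
  qed
qed

lemma F_PS: "k \<ge> 1 \<Longrightarrow> F k N = PS k N"
  unfolding F_def PS_def
  by (rule sum.mono_neutral_left) (auto simp: power_0_left)

lemma F0: "N \<ge> 1 \<Longrightarrow> F 0 N = real N - 1"
  unfolding F_def by (simp add: of_nat_diff)

lemma R_bound: "\<bar>F k N / real N ^ k\<bar> \<le> real N"
proof (cases "N = 0")
  case True thus ?thesis by (simp add: F_def)
next
  case False
  have "F k N / real N ^ k \<le> real N ^ Suc k / real N ^ k"
    using F_le False by (intro divide_right_mono) auto
  also have "\<dots> = real N" using False by simp
  finally show ?thesis using F_nonneg by simp
qed

lemma lim_R1: "(\<lambda>N. F k N / real N ^ k / real N) \<longlonglongrightarrow> 1 / real (Suc k)"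
proof (cases "k = 0")
  case True
  have "(\<lambda>N. (real N - 1) / real N) \<longlonglongrightarrow> 1" by real_asymp
  moreover have "\<forall>\<^sub>F N in sequentially. (real N - 1) / real N = F k N / real N ^ k / real N"
    by (rule eventually_sequentiallyI[of 1]) (simp add: True F0)
  ultimately show ?thesis using True by (simp add: Lim_transform_eventually)
next
  case False
  have "(\<lambda>N. F k N / real N ^ k / real N) = (\<lambda>N. PS k N / real N ^ Suc k)"
    using False by (simp add: F_PS mult.commute)
  thus ?thesis using PS_lim1 by simp
qed

lemma lim_R2: "(\<lambda>N. F k N / real N ^ k - real N / real (Suc k)) \<longlonglongrightarrow> (if k = 0 then -1 else -1/2)"
proof (cases "k = 0")
  case True
  have "\<forall>\<^sub>F N in sequentially. -1 = F k N / real N ^ k - real N / real (Suc k)"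
    by (rule eventually_sequentiallyI[of 1]) (simp add: True F0)
  from Lim_transform_eventually[OF tendsto_const this] show ?thesis using True by simp
next
  case False
  thus ?thesis using PS_lim2[of k] by (simp add: F_PS)
qed

theorem corollary5p2:
  fixes m :: nat and c :: "nat \<Rightarrow> complex" and Z :: "nat \<Rightarrow> complex \<Rightarrow> complex"
  assumes "m \<ge> 1"
    and "\<And>k. k \<le> 2 * m + 1 \<Longrightarrow> Z k meromorphic_on UNIV"
    and "\<And>k s. k \<le> 2 * m + 1 \<Longrightarrow> Re s > 2 \<Longrightarrow> Z k s = dzeta_series k s"
    and "\<forall>\<^sub>F s in cosparse UNIV.
           (\<Sum>k = 1..2 * m + 1. c k * Z k s) + c 0 * Z 0 s / 2 = 0"
  shows "(\<Sum>k = 0..2 * m + 1. c k) = 0"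
proof -
  define K where "K = 2 * m + 1"
  define cc where "cc k = (if k = 0 then c 0 / 2 else c k)" for k
  define Q where "Q N = (\<Sum>k=0..K. cc k * of_real (F k N / real N ^ k))" for N
  define G where "G x = (\<Sum>k=0..K. cc k * dzeta_series k (of_real x))" for x
  define C where "C = (\<Sum>k=0..K. norm (cc k))"
  have hs: "((\<lambda>N. Q N * of_real (real N powr -x)) has_sum G x) UNIV" if "x > 2" for x
    unfolding Q_def G_def by (rule G_has_sum[OF that])
  have bd: "norm (Q N) \<le> C * real N" for N
  proof -
    have "norm (Q N) \<le> (\<Sum>k=0..K. norm (cc k * of_real (F k N / real N ^ k)))"
      unfolding Q_def by (rule norm_sum)
    also have "\<dots> \<le> (\<Sum>k=0..K. norm (cc k) * real N)"
      by (intro sum_mono, simp only: norm_mult norm_of_real, rule mult_left_mono[OF R_bound]) simp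
    finally show ?thesis by (simp add: C_def sum_distrib_right)
  qed
  have C0: "C \<ge> 0" unfolding C_def by (intro sum_nonneg) auto
  have Q0: "Q 0 = 0" by (simp add: Q_def F_def)
  have sp: "{s. \<not> ((\<Sum>k = 1..2 * m + 1. c k * Z k s) + c 0 * Z 0 s / 2 = 0)} sparse_in UNIV"
    using assms(4) by (simp add: eventually_cosparse)
  have fr: "\<exists>y\<ge>X. G y = 0" for X
  proof -
    define a where "a = max X 3"
    define S where "S = (of_real ` {a..a+1} :: complex set)"
    define E where "E = {s. \<not> ((\<Sum>k = 1..2 * m + 1. c k * Z k s) + c 0 * Z 0 s / 2 = 0)}"
    have "compact S" unfolding S_def
      by (intro compact_continuous_image continuous_intros compact_Icc)
    hence fin: "finite (S \<inter> E)"
      using sparse_in_compact_finite[OF sparse_in_subset[OF sp[folded E_def]]] by blast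
    have "infinite S"
    proof
      assume "finite S"
      hence "finite {a..a+1}" unfolding S_def
        by (rule finite_imageD) (auto simp: inj_on_def)
      thus False using infinite_Icc[of a "a+1"] by simp
    qed
    then obtain z where z: "z \<in> S" "z \<notin> E"
      using fin by (metis Diff_iff finite_Int infinite_imp_nonempty Int_Diff_Un finite_Diff2 ex_in_conv
          Diff_eq_empty_iff Int_absorb1 order_refl finite_subset inf.cobounded1 Diff_subset)
    then obtain y where y: "y \<in> {a..a+1}" "z = of_real y" unfolding S_def by auto
    have y2: "y > 2" "y \<ge> X" using y unfolding a_def by auto
    have Zd: "Z k z = dzeta_series k (of_real y)" if "k \<le> K" for k
      using assms(3)[of k z] that y y2 by (simp add: K_def)
    have eq: "(\<Sum>k = 1..K. c k * Z k z) + c 0 * Z 0 z / 2 = 0"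
      using z unfolding E_def K_def by simp
    have "G y = cc 0 * dzeta_series 0 (of_real y) + (\<Sum>k=Suc 0..K. cc k * dzeta_series k (of_real y))"
      unfolding G_def by (rule sum.atLeast_Suc_atMost) simp
    also have "(\<Sum>k=Suc 0..K. cc k * dzeta_series k (of_real y)) = (\<Sum>k = 1..K. c k * Z k z)"
      by (intro sum.cong) (auto simp: cc_def Zd)
    also have "cc 0 * dzeta_series 0 (of_real y) = c 0 * Z 0 z / 2"
      by (simp add: cc_def Zd)
    finally have "G y = 0" using eq by (simp add: add.commute)
    thus ?thesis using y2 by blast
  qed
  have Qz: "Q N = 0" for N
    by (rule dirichlet_unique[where G = G, OF hs bd C0 fr Q0]) auto
  define A where "A = (\<Sum>k=0..K. cc k * of_real (1 / real (Suc k)))"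
  have limA: "(\<lambda>N. \<Sum>k=0..K. cc k * of_real (F k N / real N ^ k / real N)) \<longlonglongrightarrow> A"
    unfolding A_def by (intro tendsto_intros lim_R1)
  have "(\<lambda>N. \<Sum>k=0..K. cc k * of_real (F k N / real N ^ k / real N)) = (\<lambda>N. Q N / of_nat N)"
    by (simp add: Q_def sum_divide_distrib)
  hence "A = 0" using limA Qz by (simp add: LIMSEQ_const_iff)
  define L where "L (k::nat) = (if k = 0 then -1 else -1/2 :: real)" for k
  have limB: "(\<lambda>N. \<Sum>k=0..K. cc k * of_real (F k N / real N ^ k - real N / real (Suc k)))
      \<longlonglongrightarrow> (\<Sum>k=0..K. cc k * of_real (L k))"
    unfolding L_def by (intro tendsto_intros lim_R2)
  have "(\<lambda>N. \<Sum>k=0..K. cc k * of_real (F k N / real N ^ k - real N / real (Suc k)))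
      = (\<lambda>N. Q N - A * of_nat N)"
    by (intro ext) (simp add: Q_def A_def sum_distrib_right sum_subtractf[symmetric] right_diff_distrib mult.assoc)
  hence L0: "(\<Sum>k=0..K. cc k * of_real (L k)) = 0" using limB Qz \<open>A = 0\<close> by (simp add: LIMSEQ_const_iff)
  have "(\<Sum>k=0..K. cc k * of_real (L k)) = cc 0 * of_real (L 0) + (\<Sum>k=Suc 0..K. cc k * of_real (L k))"
    by (rule sum.atLeast_Suc_atMost) simp
  also have "(\<Sum>k=Suc 0..K. cc k * of_real (L k)) = (\<Sum>k=Suc 0..K. - c k / 2)"
    by (intro sum.cong) (auto simp: cc_def L_def)
  also have "cc 0 * of_real (L 0) = - c 0 / 2" by (simp add: cc_def L_def)
  finally have "- c 0 / 2 + (\<Sum>k=Suc 0..K. - c k / 2) = 0" using L0 by simp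
  hence h: "- c 0 = (\<Sum>k=Suc 0..K. c k)"
    by (simp add: sum_negf sum_divide_distrib[symmetric] field_simps)
  hence "c 0 + (\<Sum>k=Suc 0..K. c k) = 0" unfolding h[symmetric] by simp
  moreover have "(\<Sum>k=0..K. c k) = c 0 + (\<Sum>k=Suc 0..K. c k)"
    by (rule sum.atLeast_Suc_atMost) simp
  ultimately show ?thesis by (simp add: K_def)
qed

end
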